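(* Let $v$ be a real random variable with $\Pr[v\in[v^{\min},v^{\max}]]=1$, where $0\le v^{\min}<v^{\max}$, and let $c\ge 0$. There exists a cdf $G\in\mathcal{G}$ such that Mechanism 1 with $G$ is truthful, i.e. $U_{\text{coop}}(G)-U_{\text{heur}}(G)>c$, if and only if $$c<E\big[\max(0,\,v-E[v])\big].$$ Moreover, whenever this inequality holds, the cdf $G^*$ of the point mass at $E[v]$ (i.e. $G^*(r)=0$ for $r<E[v]$ and $G^*(r)=1$ for $r\ge E[v]$) makes Mechanism 1 truthful. Equivalently, $\sup_{G\in\mathcal{G}}\big(U_{\text{coop}}(G)-U_{\text{heur}}(G)\big)=E[\max(0,v-E[v])]$, and this supremum is attained by $G^*$.
   Context: Setting: A principal owns an object whose (common) monetary value $v$ is unknown; $v$ has a prior distribution supported in $[v^{\min},v^{\max}]$ with $0\le v^{\min}<v^{\max}$, and $E[\cdot]$ denotes expectation with respect to this prior. A single agent, risk-neutral with quasi-linear utility, values the object at $v$ as well; initially he knows only the prior, but he can learn $v$ exactly by incurring a cost $c\ge0$. Let $\mathcal{G}$ be the set of cumulative distribution functions of probability measures on $[v^{\min},v^{\max}]$; for $G\in\mathcal{G}$ write $dG$ for the associated measure and $\widehat G(x)=\int_{v^{\min}}^{x}G(r)\,dr$. Mechanism 1 (parameters $\epsilon>0$ and $G\in\mathcal{G}$): (1) the principal secretly draws $r$: with probability $\epsilon$ uniformly on $[v^{\min},v^{\max}]$, with probability $1-\epsilon$ according to $G$; (2) the agent bids a real number $b$; (3) $r$ is revealed; if $b\ge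 r$ the agent gets the object and pays $r$ (agent's utility $v-r$), otherwise nothing happens (utility $0$). In the limit $\epsilon\to0$, define the agent's optimal expected utility when he computes $v$ (cooperative strategy, excluding the cost $c$) as $U_{\text{coop}}(G)=E\big[\sup_{b}\int_{[v^{\min},b]}(v-r)\,dG(r)\big]$, and when he does not compute $v$ (heuristic strategy, bidding based on the prior only) as $U_{\text{heur}}(G)=\sup_{b}\int_{[v^{\min},b]}(E[v]-r)\,dG(r)$. Mechanism 1 with $G$ is called truthful if $U_{\text{coop}}(G)-U_{\text{heur}}(G)>c$. *)

theory Defs
  imports "HOL-Probability.Probability"
begin

text \<open>The set \<open>\<G>\<close> of (distributions given by) cdfs of probability measures on
  the interval [vmin, vmax]; a cdf is identified with its Borel probability measure dG.\<close>
definition reserve_dists :: "real \<Rightarrow> real \<Rightarrow> real measure set" where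
  "reserve_dists vmin vmax =
     {G. prob_space G \<and> sets G = sets borel \<and> emeasure G (UNIV - {vmin..vmax}) = 0}"

text \<open>Payoff of bidding b when the value is x and the reserve r is drawn from G:
  integral of (x - r) over r in [vmin, b] with respect to dG.\<close>
definition bid_payoff :: "real \<Rightarrow> real measure \<Rightarrow> real \<Rightarrow> real \<Rightarrow> real" where
  "bid_payoff vmin G x b = (LINT r:{vmin..b}|G. (x - r))"

definition U_coop :: "'a measure \<Rightarrow> ('a \<Rightarrow> real) \<Rightarrow> real \<Rightarrow> real measure \<Rightarrow> real" where
  "U_coop M v vmin G = (\<integral>\<omega>. (SUP b::real. bid_payoff vmin G (v \<omega>) b) \<partial>M)"

definition U_heur :: "'a measure \<Rightarrow> ('a \<Rightarrow> real) \<Rightarrow> real \<Rightarrow> real measure \<Rightarrow> real" where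
  "U_heur M v vmin G = (SUP b::real. bid_payoff vmin G (\<integral>\<omega>. v \<omega> \<partial>M) b)"

definition truthful :: "'a measure \<Rightarrow> ('a \<Rightarrow> real) \<Rightarrow> real \<Rightarrow> real \<Rightarrow> real measure \<Rightarrow> bool" where
  "truthful M v vmin c G \<longleftrightarrow> U_coop M v vmin G - U_heur M v vmin G > c"

end

theory Submission
  imports Defs
begin

lemma bp_meas:
  fixes vmin b x :: real
  assumes "sets G = sets borel"
  shows "(\<lambda>r. indicator {vmin..b} r * (x - r)) \<in> borel_measurable G"
proof -
  have eq: "borel_measurable G = borel_measurable borel" by (rule measurable_cong_sets[OF assms refl])
  show ?thesis unfolding eq by measurable
qed

lemma bp_integrable:
  fixes vmin b x :: real
  assumes "prob_space G" "sets G = sets borel"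
  shows "integrable G (\<lambda>r. indicator {vmin..b} r * (x - r))"
proof -
  interpret prob_space G by fact
  show ?thesis
  proof (rule integrable_const_bound[where B="\<bar>x\<bar> + \<bar>vmin\<bar> + \<bar>b\<bar>"])
    show "AE r in G. norm (indicator {vmin..b} r * (x - r)) \<le> \<bar>x\<bar> + \<bar>vmin\<bar> + \<bar>b\<bar>"
      by (auto simp: indicator_def)
  qed (rule bp_meas[OF assms(2)])
qed

lemma bp_linear:
  assumes "prob_space G" "sets G = sets borel"
  shows "bid_payoff vmin G x b = bid_payoff vmin G y b + (x - y) * measure G {vmin..b}"
proof -
  interpret prob_space G by fact
  have eq: "(\<lambda>r. indicator {vmin..b} r * (x - r)) = (\<lambda>r. indicator {vmin..b} r * (y - r) + (x - y) * indicator {vmin..b} r)"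
    by (auto simp: fun_eq_iff algebra_simps)
  have s: "{vmin..b} \<in> sets G" using assms(2) by simp
  have ii: "integrable G (indicator {vmin..b} :: real \<Rightarrow> real)"
    using s by (simp add: emeasure_finite less_top[symmetric])
  have "bid_payoff vmin G x b = (\<integral>r. indicator {vmin..b} r * (x - r) \<partial>G)"
    by (simp add: bid_payoff_def set_lebesgue_integral_def)
  also have "\<dots> = (\<integral>r. indicator {vmin..b} r * (y - r) \<partial>G) + (\<integral>r. (x - y) * indicator {vmin..b} r \<partial>G)"
    unfolding eq
    by (rule Bochner_Integration.integral_add[OF bp_integrable[OF assms]]) (use ii in auto)
  also have "(\<integral>r. (x - y) * indicator {vmin..b} r \<partial>G) = (x - y) * measure G {vmin..b}"
    using s by simp
  finally show ?thesis by (simp add: bid_payoff_def set_lebesgue_integral_def)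
qed

lemma bp_le:
  assumes "prob_space G" "sets G = sets borel"
  shows "bid_payoff vmin G x b \<le> max 0 (x - vmin)"
proof -
  interpret prob_space G by fact
  have "bid_payoff vmin G x b = (\<integral>r. indicator {vmin..b} r * (x - r) \<partial>G)"
    by (simp add: bid_payoff_def set_lebesgue_integral_def)
  also have "\<dots> \<le> (\<integral>r. max 0 (x - vmin) \<partial>G)"
    by (rule integral_mono[OF bp_integrable[OF assms]]) (auto simp: indicator_def)
  finally show ?thesis by (simp add: prob_space)
qed

lemma bp_neg:
  assumes "b < vmin"
  shows "bid_payoff vmin G x b = 0"
  using assms by (simp add: bid_payoff_def set_lebesgue_integral_def)

lemma phi_bdd:
  assumes "prob_space G" "sets G = sets borel"
  shows "bdd_above (range (bid_payoff vmin G x))"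
  using bp_le[OF assms] by (intro bdd_aboveI) auto

lemma phi_nonneg:
  assumes "prob_space G" "sets G = sets borel"
  shows "0 \<le> (SUP b. bid_payoff vmin G x b)"
proof -
  have "bid_payoff vmin G x (vmin - 1) \<le> (SUP b. bid_payoff vmin G x b)"
    by (rule cSUP_upper[OF _ phi_bdd[OF assms]]) auto
  then show ?thesis using bp_neg[of "vmin - 1" vmin G x] by simp
qed

lemma phi_le:
  assumes "prob_space G" "sets G = sets borel"
  shows "(SUP b. bid_payoff vmin G x b) \<le> (SUP b. bid_payoff vmin G y b) + max 0 (x - y)"
proof (rule cSUP_least)
  fix b
  interpret prob_space G by fact
  have m: "0 \<le> measure G {vmin..b}" "measure G {vmin..b} \<le> 1" by auto
  have "(x - y) * measure G {vmin..b} \<le> max 0 (x - y)"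
  proof (cases "x - y \<ge> 0")
    case True then show ?thesis using mult_left_mono[OF m(2) True] by simp
  next
    case False then show ?thesis using mult_nonpos_nonneg[of "x - y", OF _ m(1)] by simp
  qed
  moreover have "bid_payoff vmin G y b \<le> (SUP b. bid_payoff vmin G y b)"
    by (rule cSUP_upper[OF _ phi_bdd[OF assms]]) auto
  ultimately show "bid_payoff vmin G x b \<le> (SUP b. bid_payoff vmin G y b) + max 0 (x - y)"
    using bp_linear[OF assms, where x=x and b=b and y=y] by simp
qed simp

lemma phi_cont:
  assumes "prob_space G" "sets G = sets borel"
  shows "continuous_on UNIV (\<lambda>x. SUP b. bid_payoff vmin G x b)"
  unfolding continuous_on_iff
proof (intro ballI allI impI)
  fix x :: real and e :: real assume "e > 0"
  show "\<exists>d>0. \<forall>x'\<in>UNIV. dist x' x < d \<longrightarrow>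
      dist (SUP b. bid_payoff vmin G x' b) (SUP b. bid_payoff vmin G x b) < e"
  proof (intro exI[of _ e] conjI ballI impI)
    fix x' :: real assume "dist x' x < e"
    then show "dist (SUP b. bid_payoff vmin G x' b) (SUP b. bid_payoff vmin G x b) < e"
      using phi_le[OF assms, where vmin=vmin and x=x' and y=x] phi_le[OF assms, where vmin=vmin and x=x and y=x']
      by (auto simp: dist_real_def abs_less_iff)
  qed fact
qed

lemma diff_le:
  fixes M :: "'a measure" and v :: "'a \<Rightarrow> real" and vmin vmax :: real
  assumes P: "prob_space M" and vm: "v \<in> borel_measurable M"
    and ae: "AE \<omega> in M. v \<omega> \<in> {vmin..vmax}"
    and G: "prob_space G" "sets G = sets borel"
  shows "U_coop M v vmin G - U_heur M v vmin G \<le> (\<integral>\<omega>. max 0 (v \<omega> - (\<integral>\<omega>. v \<omega> \<partial>M)) \<partial>M)"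
proof -
  interpret prob_space M by fact
  define Ev where "Ev = (\<integral>\<omega>. v \<omega> \<partial>M)"
  define phi where "phi x = (SUP b. bid_payoff vmin G x b)" for x
  have pm: "phi \<in> borel_measurable borel"
    unfolding phi_def by (rule borel_measurable_continuous_onI[OF phi_cont[OF G]])
  have pl: "phi x \<le> phi Ev + max 0 (x - Ev)" for x
    unfolding phi_def by (rule phi_le[OF G])
  have pn: "0 \<le> phi x" for x unfolding phi_def by (rule phi_nonneg[OF G])
  have i1: "integrable M (\<lambda>\<omega>. phi (v \<omega>))"
  proof (rule integrable_const_bound[where B="phi Ev + \<bar>vmax\<bar> + \<bar>Ev\<bar>"])
    show "AE \<omega> in M. norm (phi (v \<omega>)) \<le> phi Ev + \<bar>vmax\<bar> + \<bar>Ev\<bar>"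
      using ae
    proof eventually_elim
      case (elim \<omega>)
      then show ?case using pl[of "v \<omega>"] pn[of "v \<omega>"] by auto
    qed
  qed (rule measurable_compose[OF vm pm])
  have i2: "integrable M (\<lambda>\<omega>. max 0 (v \<omega> - Ev))"
  proof (rule integrable_const_bound[where B="\<bar>vmax\<bar> + \<bar>Ev\<bar>"])
    show "AE \<omega> in M. norm (max 0 (v \<omega> - Ev)) \<le> \<bar>vmax\<bar> + \<bar>Ev\<bar>"
      using ae by eventually_elim auto
  qed (use vm in measurable)
  have "U_coop M v vmin G = (\<integral>\<omega>. phi (v \<omega>) \<partial>M)"
    by (simp add: U_coop_def phi_def)
  also have "\<dots> \<le> (\<integral>\<omega>. phi Ev + max 0 (v \<omega> - Ev) \<partial>M)"
    by (rule integral_mono[OF i1]) (use i2 pl in auto)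
  also have "\<dots> = phi Ev + (\<integral>\<omega>. max 0 (v \<omega> - Ev) \<partial>M)"
    using i2 by (simp add: prob_space)
  finally show ?thesis by (simp add: U_heur_def phi_def Ev_def)
qed

lemma Ev_in:
  fixes M :: "'a measure" and v :: "'a \<Rightarrow> real" and vmin vmax :: real
  assumes P: "prob_space M" and vm: "v \<in> borel_measurable M"
    and ae: "AE \<omega> in M. v \<omega> \<in> {vmin..vmax}"
  shows "(\<integral>\<omega>. v \<omega> \<partial>M) \<in> {vmin..vmax}"
proof -
  interpret prob_space M by fact
  have iv: "integrable M v"
  proof (rule integrable_const_bound[where B="\<bar>vmin\<bar> + \<bar>vmax\<bar>"])
    show "AE \<omega> in M. norm (v \<omega>) \<le> \<bar>vmin\<bar> + \<bar>vmax\<bar>"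
      using ae by eventually_elim auto
  qed fact
  have "(\<integral>\<omega>. vmin \<partial>M) \<le> (\<integral>\<omega>. v \<omega> \<partial>M)"
    by (rule integral_mono_AE) (use iv ae in auto)
  moreover have "(\<integral>\<omega>. v \<omega> \<partial>M) \<le> (\<integral>\<omega>. vmax \<partial>M)"
    by (rule integral_mono_AE) (use iv ae in auto)
  ultimately show ?thesis by (simp add: prob_space)
qed

lemma star_phi:
  fixes vmin e x :: real
  assumes "vmin \<le> e"
  shows "(SUP b. bid_payoff vmin (return borel e) x b) = max 0 (x - e)"
proof -
  have P: "prob_space (return borel e)" by (rule prob_space_return) simp
  have S: "sets (return borel e) = sets borel" by simp
  have bp: "bid_payoff vmin (return borel e) x b = indicator {vmin..b} e * (x - e)" for b
    unfolding bid_payoff_def set_lebesgue_integral_def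
    by (simp add: integral_return[OF _ bp_meas[OF refl]])
  show ?thesis
  proof (rule antisym)
    show "(SUP b. bid_payoff vmin (return borel e) x b) \<le> max 0 (x - e)"
      by (rule cSUP_least) (auto simp: bp indicator_def)
    have "x - e \<le> (SUP b. bid_payoff vmin (return borel e) x b)"
      using cSUP_upper[OF UNIV_I phi_bdd[OF P S, where vmin=vmin and x=x], of e] assms by (simp add: bp)
    then show "max 0 (x - e) \<le> (SUP b. bid_payoff vmin (return borel e) x b)"
      using phi_nonneg[OF P S] by simp
  qed
qed

theorem theorem1:
  fixes M :: "'a measure" and v :: "'a \<Rightarrow> real" and vmin vmax c :: real
  assumes "prob_space M"
    and "v \<in> borel_measurable M"
    and "AE \<omega> in M. v \<omega> \<in> {vmin..vmax}"
    and "0 \<le> vmin" and "vmin < vmax" and "0 \<le> c"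
  defines "Ev \<equiv> (\<integral>\<omega>. v \<omega> \<partial>M)"
  defines "Gstar \<equiv> return borel Ev"
  shows "((\<exists>G\<in>reserve_dists vmin vmax. truthful M v vmin c G)
            \<longleftrightarrow> c < (\<integral>\<omega>. max 0 (v \<omega> - Ev) \<partial>M))
       \<and> (c < (\<integral>\<omega>. max 0 (v \<omega> - Ev) \<partial>M) \<longrightarrow> truthful M v vmin c Gstar)
       \<and> Gstar \<in> reserve_dists vmin vmax
       \<and> (SUP G\<in>reserve_dists vmin vmax. U_coop M v vmin G - U_heur M v vmin G)
            = (\<integral>\<omega>. max 0 (v \<omega> - Ev) \<partial>M)
       \<and> U_coop M v vmin Gstar - U_heur M v vmin Gstar = (\<integral>\<omega>. max 0 (v \<omega> - Ev) \<partial>M)"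
  proof -
  interpret prob_space M by fact
  let ?E = "(\<integral>\<omega>. max 0 (v \<omega> - Ev) \<partial>M)"
  have EvI: "Ev \<in> {vmin..vmax}" unfolding Ev_def by (rule Ev_in[OF assms(1-3)])
  have le: "U_coop M v vmin G - U_heur M v vmin G \<le> ?E" if "G \<in> reserve_dists vmin vmax" for G
    using diff_le[OF assms(1-3), of G] that by (simp add: reserve_dists_def Ev_def)
  have GsI: "Gstar \<in> reserve_dists vmin vmax"
    using EvI unfolding reserve_dists_def Gstar_def
    by (auto intro!: prob_space_return)
  have phis: "(\<lambda>\<omega>. SUP b. bid_payoff vmin Gstar (v \<omega>) b) = (\<lambda>\<omega>. max 0 (v \<omega> - Ev))"
    using EvI unfolding Gstar_def by (simp add: star_phi)
  have eq: "U_coop M v vmin Gstar - U_heur M v vmin Gstar = ?E"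
    using EvI unfolding U_coop_def U_heur_def phis
    by (simp add: Gstar_def star_phi Ev_def[symmetric])
  have sup: "(SUP G\<in>reserve_dists vmin vmax. U_coop M v vmin G - U_heur M v vmin G) = ?E"
    by (rule cSup_eq_maximum) (use GsI eq le in \<open>auto intro!: image_eqI[of _ _ Gstar]\<close>)
  have iff: "(\<exists>G\<in>reserve_dists vmin vmax. truthful M v vmin c G) \<longleftrightarrow> c < ?E"
  proof
    assume "\<exists>G\<in>reserve_dists vmin vmax. truthful M v vmin c G"
    then obtain G where "G \<in> reserve_dists vmin vmax" "truthful M v vmin c G" by blast
    then show "c < ?E" using le[of G] unfolding truthful_def by linarith
  next
    assume "c < ?E"
    then show "\<exists>G\<in>reserve_dists vmin vmax. truthful M v vmin c G"
      using GsI eq unfolding truthful_def by (intro bexI[of _ Gstar]) auto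
  qed
  show ?thesis
    using iff GsI eq sup unfolding truthful_def by simp
qed

end
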